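(* Let $\mathcal{H}$ be a real Hilbert space and let $f,g\in\Gamma_0(\mathcal{H})$. Suppose that for some $x_0\in\operatorname{dom} f\cap\operatorname{dom} g$, $$\Vert \operatorname{prox}_f(x)-x_0\Vert = \Vert \operatorname{prox}_g(x)-x_0\Vert \quad\text{for all } x\in\mathcal{H}.$$ Then $f-f(x_0)=g-g(x_0)$ on $\mathcal{H}$.
   Context: $\Gamma_0(\mathcal{H})$ denotes the set of proper, convex, lower semicontinuous functions $\mathcal{H}\to\mathbb{R}\cup\{+\infty\}$. For $f\in\Gamma_0(\mathcal{H})$, $\operatorname{prox}_f(x)=\operatorname{argmin}_{y\in\mathcal{H}}\{f(y)+\tfrac12\Vert x-y\Vert^2\}$. $\operatorname{dom} f=\{x: f(x)<+\infty\}$. *)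

theory Defs
  imports "HOL-Analysis.Analysis" "HOL-Library.Extended_Real"
begin

text \<open>Functions H -> R \<union> {+\<infinity>} are modelled as ereal-valued functions never taking -\<infinity>.\<close>

definition proper_fun :: "('a \<Rightarrow> ereal) \<Rightarrow> bool" where
  "proper_fun f \<longleftrightarrow> (\<forall>x. f x \<noteq> -\<infinity>) \<and> (\<exists>x. f x \<noteq> \<infinity>)"

definition convex_fun :: "('a::real_vector \<Rightarrow> ereal) \<Rightarrow> bool" where
  "convex_fun f \<longleftrightarrow> (\<forall>x y (t::real). 0 \<le> t \<and> t \<le> 1 \<longrightarrow>
      f ((1 - t) *\<^sub>R x + t *\<^sub>R y) \<le> ereal (1 - t) * f x + ereal t * f y)"

definition lsc_fun :: "('a::topological_space \<Rightarrow> ereal) \<Rightarrow> bool" where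
  "lsc_fun f \<longleftrightarrow> (\<forall>c. closed {x. f x \<le> c})"

definition Gamma0 :: "('a::real_inner \<Rightarrow> ereal) set" where
  "Gamma0 = {f. proper_fun f \<and> convex_fun f \<and> lsc_fun f}"

definition edom :: "('a \<Rightarrow> ereal) \<Rightarrow> 'a set" where
  "edom f = {x. f x < \<infinity>}"

definition prox :: "('a::real_inner \<Rightarrow> ereal) \<Rightarrow> 'a \<Rightarrow> 'a" where
  "prox f x = (THE p. \<forall>y. f p + ereal ((norm (x - p))\<^sup>2 / 2) \<le> f y + ereal ((norm (x - y))\<^sup>2 / 2))"

end

theory Submission
  imports Defs
begin

lemma G0D: assumes "f \<in> Gamma0" shows "\<And>x. f x \<noteq> -\<infinity>" "\<exists>x. f x \<noteq> \<infinity>" "convex_fun f" "lsc_fun f"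
  using assms by (auto simp: Gamma0_def proper_fun_def)

lemma conv_real:
  assumes "f \<in> Gamma0" "f x = ereal a" "f y = ereal b" "0 \<le> t" "t \<le> 1"
  shows "f ((1 - t) *\<^sub>R x + t *\<^sub>R y) \<le> ereal ((1 - t) * a + t * b)"
proof -
  have "f ((1 - t) *\<^sub>R x + t *\<^sub>R y) \<le> ereal (1 - t) * f x + ereal t * f y"
    using assms(1,4,5) by (auto simp: Gamma0_def convex_fun_def)
  thus ?thesis using assms(2,3) by simp
qed

lemma lsc_closed: "f \<in> Gamma0 \<Longrightarrow> closed {x. f x \<le> c}" by (simp add: Gamma0_def lsc_fun_def)

lemma lsc_lim:
  assumes "f \<in> Gamma0" "(z \<longlongrightarrow> l) sequentially" "eventually (\<lambda>n. f (z n) \<le> c) sequentially"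
  shows "f l \<le> c"
proof -
  have "l \<in> {x. f x \<le> c}"
    by (rule Lim_in_closed_set[OF lsc_closed[OF assms(1)] _ trivial_limit_sequentially assms(2)]) (use assms(3) in auto)
  thus ?thesis by simp
qed

lemma lsc_nbhd:
  assumes "f \<in> Gamma0" "c < f y"
  shows "\<exists>d>0. \<forall>q. dist q y < d \<longrightarrow> c < f q"
proof -
  have "open (- {x. f x \<le> c})" using lsc_closed[OF assms(1)] by auto
  moreover have "y \<in> - {x. f x \<le> c}" using assms(2) by auto
  ultimately obtain d where "d>0" "\<forall>q. dist q y < d \<longrightarrow> q \<in> - {x. f x \<le> c}"
    unfolding open_dist by blast
  thus ?thesis by (auto simp: not_le)
qed

lemma fin_real: "f \<in> Gamma0 \<Longrightarrow> f x \<noteq> \<infinity> \<Longrightarrow> f x = ereal (real_of_ereal (f x))"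
  using G0D(1)[of f x] by (cases "f x") auto

lemma ball_lower:
  fixes f :: "'a::{real_inner,complete_space} \<Rightarrow> ereal"
  assumes f: "f \<in> Gamma0" and a: "f a \<noteq> \<infinity>"
  shows "\<exists>m::real. \<forall>z\<in>cball a 1. ereal m \<le> f z"
proof (rule ccontr)
  assume "\<not> ?thesis"
  hence ex: "\<forall>m::real. \<exists>z\<in>cball a 1. f z < ereal m" by (auto simp: not_le)
  define pick where "pick m = (SOME z. z \<in> cball a 1 \<and> f z < ereal m)" for m
  have pick: "pick m \<in> cball a 1 \<and> f (pick m) < ereal m" for m
    unfolding pick_def by (rule someI_ex) (use ex in blast)
  define t :: "nat \<Rightarrow> real" where "t n = (1/2)^(Suc n)" for n
  define w where "w = rec_nat a (\<lambda>n wn. (1 - t n) *\<^sub>R wn + t n *\<^sub>R pick (- (real n + 1 + \<bar>real_of_ereal (f wn)\<bar>) / t n))"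
  have w0: "w 0 = a" and wS: "w (Suc n) = (1 - t n) *\<^sub>R w n + t n *\<^sub>R pick (- (real n + 1 + \<bar>real_of_ereal (f (w n))\<bar>) / t n)" for n
    by (simp_all add: w_def)
  have tpos: "0 < t n" "t n \<le> 1" for n using power_le_one[of "1/2::real" n] unfolding t_def by auto
  have step: "w (Suc n) \<in> cball a 1 \<and> f (w (Suc n)) \<le> ereal (- real n - 1)"
    if "w n \<in> cball a 1" "f (w n) \<noteq> \<infinity>" for n
  proof -
    define r where "r = real_of_ereal (f (w n))"
    have r: "f (w n) = ereal r" unfolding r_def using fin_real[OF f that(2)] .
    define M where "M = - (real n + 1 + \<bar>r\<bar>) / t n"
    define z where "z = pick M"
    have z: "z \<in> cball a 1" "f z < ereal M" using pick[of M] unfolding z_def by auto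
    have "f z \<noteq> \<infinity>" using z(2) by auto
    then obtain s where s: "f z = ereal s" using fin_real[OF f] by blast
    have sM: "s < M" using z(2) s by simp
    have eq: "w (Suc n) = (1 - t n) *\<^sub>R w n + t n *\<^sub>R z" using wS[of n] unfolding z_def M_def r_def .
    have "f (w (Suc n)) \<le> ereal ((1 - t n) * r + t n * s)"
      unfolding eq by (rule conv_real[OF f r s]) (use tpos[of n] in auto)
    also have "(1 - t n) * r + t n * s \<le> (1 - t n) * r + t n * M"
      using sM tpos[of n] by auto
    also have "t n * M = - (real n + 1 + \<bar>r\<bar>)" unfolding M_def using tpos[of n] by simp
    also have "(1 - t n) * r \<le> \<bar>r\<bar>"
    proof -
      have "(1 - t n) * r \<le> \<bar>(1 - t n) * r\<bar>" by simp
      also have "\<dots> = (1 - t n) * \<bar>r\<bar>" using tpos[of n] by (simp add: abs_mult)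
      also have "\<dots> \<le> \<bar>r\<bar>" using tpos[of n] by (simp add: mult_left_le_one_le)
      finally show ?thesis .
    qed
    hence "(1 - t n) * r + - (real n + 1 + \<bar>r\<bar>) \<le> - real n - 1" by simp
    finally have 1: "f (w (Suc n)) \<le> ereal (- real n - 1)" by simp
    have "w (Suc n) \<in> cball a 1"
      unfolding eq using convexD[OF convex_cball that(1) z(1), of "1 - t n" "t n"] tpos[of n] by auto
    with 1 show ?thesis by simp
  qed
  have inv: "w n \<in> cball a 1 \<and> f (w n) \<noteq> \<infinity>" for n
  proof (induction n)
    case 0 then show ?case using a w0 by simp
  next
    case (Suc n) then show ?case using step[of n] by auto
  qed
  have dec: "f (w (Suc n)) \<le> ereal (- real n - 1)" for n using step[of n] inv[of n] by auto
  define d where "d n = w (Suc n) - w n" for n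
  have dn: "norm (d n) \<le> 2 * t n" for n
  proof -
    define z where "z = pick (- (real n + 1 + \<bar>real_of_ereal (f (w n))\<bar>) / t n)"
    have "z \<in> cball a 1" using pick unfolding z_def by blast
    hence "norm (z - w n) \<le> 2"
    proof -
      have "dist z (w n) \<le> dist z a + dist a (w n)" by (rule dist_triangle)
      moreover have "dist z a \<le> 1" using \<open>z \<in> cball a 1\<close> by (simp add: dist_commute)
      moreover have "dist a (w n) \<le> 1" using inv[of n] by simp
      ultimately show ?thesis by (simp add: dist_norm)
    qed
    moreover have "d n = t n *\<^sub>R (z - w n)" unfolding d_def wS z_def by (simp add: algebra_simps)
    ultimately show ?thesis using tpos[of n] by (simp add: mult.commute mult_left_mono)
  qed
  have dn': "norm (w (Suc n) - w n) \<le> (1/2)^n" for n using dn[of n] unfolding d_def t_def by simp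
  have bnd: "norm (w n - w m) \<le> 2*(1/2)^m - 2*(1/2)^n" if "m \<le> n" for m n
    using that
  proof (induction n rule: dec_induct)
    case base then show ?case by simp
  next
    case (step n)
    have "norm (w (Suc n) - w m) \<le> norm (w (Suc n) - w n) + norm (w n - w m)"
      using norm_triangle_ineq[of "w (Suc n) - w n" "w n - w m"] by simp
    also have "\<dots> \<le> (1/2)^n + (2*(1/2)^m - 2*(1/2)^n)" using dn'[of n] step.IH by simp
    finally show ?case by simp
  qed
  have bnd2: "dist (w m) (w n) \<le> 4*(1/2)^M" if "M \<le> m" "M \<le> n" for M m n
  proof -
    have "dist (w m) (w n) \<le> dist (w m) (w M) + dist (w M) (w n)" by (rule dist_triangle)
    also have "dist (w m) (w M) \<le> 2*(1/2)^M"
      using bnd[OF that(1)] zero_le_power[of "1/2::real" m] unfolding dist_norm by linarith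
    also have "dist (w M) (w n) \<le> 2*(1/2)^M"
      using bnd[OF that(2)] zero_le_power[of "1/2::real" n] unfolding dist_norm norm_minus_commute[of "w M"] by linarith
    finally show ?thesis by simp
  qed
  have "Cauchy w"
  proof (rule metric_CauchyI)
    fix e :: real assume "0 < e"
    then obtain M where "(1/2::real)^M < e/4" using real_arch_pow_inv[of "e/4" "1/2::real"] by auto
    show "\<exists>M. \<forall>m\<ge>M. \<forall>n\<ge>M. dist (w m) (w n) < e"
    proof (intro exI allI impI)
      fix m n assume "M \<le> m" "M \<le> n"
      hence "dist (w m) (w n) \<le> 4*(1/2)^M" by (rule bnd2)
      also have "\<dots> < e" using \<open>(1/2::real)^M < e/4\<close> by simp
      finally show "dist (w m) (w n) < e" .
    qed
  qed
  then obtain l where lim: "w \<longlonglongrightarrow> l" using Cauchy_convergent convergent_def by blast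
  have "f (l) \<le> ereal (- real N)" for N
  proof (rule lsc_lim[OF f lim])
    show "eventually (\<lambda>n. f (w n) \<le> ereal (- real N)) sequentially"
      unfolding eventually_sequentially
    proof (intro exI allI impI)
      fix n assume "Suc N \<le> n"
      then obtain m where m: "n = Suc m" "N \<le> m" by (cases n) auto
      have "f (w n) \<le> ereal (- real m - 1)" using dec m by simp
      also have "\<dots> \<le> ereal (- real N)" using m by simp
      finally show "f (w n) \<le> ereal (- real N)" .
    qed
  qed
  moreover have "f (l) \<noteq> -\<infinity>" using G0D(1)[OF f] .
  ultimately show False
  proof (cases "f (l)")
    case (real r)
    obtain N :: nat where "N > - r" using reals_Archimedean2 by blast
    with real \<open>\<And>N. f (l) \<le> ereal (- real N)\<close>[of N] show False by simp
  qed auto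
qed
lemma nsq_add: "(norm (u + v))^2 = (norm u)^2 + 2 * (u \<bullet> v) + (norm v)^2"
  for u v :: "'a::real_inner"
  by (simp add: power2_norm_eq_inner inner_add_left inner_add_right inner_commute)

lemma nsq_diff: "(norm (u - v))^2 = (norm u)^2 - 2 * (u \<bullet> v) + (norm v)^2"
  for u v :: "'a::real_inner"
  by (simp add: power2_norm_eq_inner inner_diff_left inner_diff_right inner_commute)

lemma mid_id:
  fixes y z1 z2 :: "'a::real_inner"
  shows "(norm (y - ((1 - 1/2) *\<^sub>R z1 + (1/2) *\<^sub>R z2)))^2 = (norm (y-z1))^2/2 + (norm(y-z2))^2/2 - (norm (z1 - z2))^2/4"
proof -
  define u where "u = y - z1"
  define v where "v = y - z2"
  have e1: "y - ((1 - 1/2) *\<^sub>R z1 + (1/2) *\<^sub>R z2) = (1/2) *\<^sub>R u + (1/2) *\<^sub>R v"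
    unfolding u_def v_def by (simp add: algebra_simps, simp flip: scaleR_add_left)
  have e2: "z1 - z2 = v - u" unfolding u_def v_def by simp
  show ?thesis unfolding e1 e2 u_def[symmetric] v_def[symmetric] nsq_add nsq_diff
    by (simp add: power2_eq_square inner_commute field_simps)
qed
lemma lin_lower:
  fixes f :: "'a::{real_inner,complete_space} \<Rightarrow> ereal"
  assumes f: "f \<in> Gamma0" and a: "f a \<noteq> \<infinity>"
  shows "\<exists>A B. 0 \<le> B \<and> (\<forall>z. ereal (- A - B * norm (z - a)) \<le> f z)"
proof -
  obtain m where m: "\<forall>z\<in>cball a 1. ereal m \<le> f z" using ball_lower[OF f a] by blast
  obtain r where r: "f a = ereal r" using fin_real[OF f a] by blast
  define B where "B = \<bar>m\<bar> + \<bar>r\<bar>"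
  have "ereal (- B - B * norm (z - a)) \<le> f z" for z
  proof (cases "f z = \<infinity>")
    case True then show ?thesis by simp
  next
    case False
    then obtain s where s: "f z = ereal s" using fin_real[OF f] by blast
    define \<rho> where "\<rho> = norm (z - a)"
    show ?thesis
    proof (cases "\<rho> \<le> 1")
      case True
      hence "z \<in> cball a 1" unfolding \<rho>_def by (simp add: dist_norm norm_minus_commute)
      hence "ereal m \<le> f z" using m by blast
      hence "m \<le> s" using s by simp
      moreover have "0 \<le> B * \<rho>" unfolding B_def \<rho>_def by simp
      ultimately show ?thesis using s unfolding \<rho>_def[symmetric] B_def by simp
    next
      case False
      hence rp: "\<rho> > 1" by simp
      define t where "t = 1 / \<rho>"
      have t: "0 \<le> t" "t \<le> 1" "t * \<rho> = 1" using rp unfolding t_def by auto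
      define u where "u = (1 - t) *\<^sub>R a + t *\<^sub>R z"
      have "u - a = t *\<^sub>R (z - a)" unfolding u_def by (simp add: algebra_simps)
      hence "norm (u - a) = 1" using t unfolding \<rho>_def by simp
      hence "u \<in> cball a 1" by (simp add: dist_norm norm_minus_commute)
      hence "ereal m \<le> f u" using m by auto
      also have "f u \<le> ereal ((1 - t) * r + t * s)" unfolding u_def by (rule conv_real[OF f r s t(1,2)])
      finally have "m \<le> (1 - t) * r + t * s" by simp
      hence "\<rho> * m \<le> \<rho> * ((1 - t) * r + t * s)" using rp by (simp add: mult_left_mono)
      also have "\<dots> = \<rho> * r - (t * \<rho>) * r + (t * \<rho>) * s" by (simp add: algebra_simps)
      also have "\<dots> = (\<rho> - 1) * r + s" using t(3) by (simp add: algebra_simps)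
      finally have 1: "\<rho> * m \<le> (\<rho> - 1) * r + s" .
      have 2: "- (\<rho> * \<bar>m\<bar>) \<le> \<rho> * m" using rp mult_left_mono[of "-\<bar>m\<bar>" m \<rho>] by simp
      have 3: "(\<rho> - 1) * r \<le> \<rho> * \<bar>r\<bar>"
      proof -
        have "(\<rho> - 1) * r \<le> (\<rho> - 1) * \<bar>r\<bar>" using rp by (simp add: mult_left_mono)
        also have "\<dots> \<le> \<rho> * \<bar>r\<bar>" by (simp add: algebra_simps)
        finally show ?thesis .
      qed
      have "- B - B * \<rho> \<le> s" using 1 2 3 unfolding B_def by (simp add: algebra_simps)
      then show ?thesis using s unfolding \<rho>_def by simp
    qed
  qed
  moreover have "0 \<le> B" unfolding B_def by simp
  ultimately show ?thesis by blast
qed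
lemma sq_bound: "0 < c \<Longrightarrow> B * s \<le> c * s^2 + B^2 / (4*c)" for B s c :: real
proof -
  assume c: "0 < c"
  have "0 \<le> (c * s - B/2)^2 / c" using c by simp
  also have "\<dots> = c * s^2 - B * s + B^2/(4*c)" using c by (simp add: power2_eq_square field_simps)
  finally show ?thesis by simp
qed

lemma prox_exists:
  fixes f :: "'a::{real_inner,complete_space} \<Rightarrow> ereal"
  assumes f: "f \<in> Gamma0" and c: "0 < c"
  shows "\<exists>p. f p \<noteq> \<infinity> \<and> (\<forall>z. f p + ereal (c * (norm (y - p))^2) \<le> f z + ereal (c * (norm (y - z))^2))"
proof -
  obtain a where a: "f a \<noteq> \<infinity>" using G0D(2)[OF f] by blast
  obtain A B where B: "0 \<le> B" and AB: "\<And>z. ereal (- A - B * norm (z - a)) \<le> f z"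
    using lin_lower[OF f a] by blast
  define fr where "fr z = real_of_ereal (f z)" for z
  have frE: "f z \<noteq> \<infinity> \<Longrightarrow> f z = ereal (fr z)" for z unfolding fr_def using fin_real[OF f] by blast
  define D where "D = {z. f z \<noteq> \<infinity>}"
  define \<phi> where "\<phi> z = fr z + c * (norm (y - z))^2" for z
  define L where "L = - A - B * norm (y - a) - B^2/(4*c)"
  have low: "L \<le> \<phi> z" if "z \<in> D" for z
  proof -
    have "ereal (- A - B * norm (z - a)) \<le> ereal (fr z)" using AB[of z] frE[of z] that D_def by simp
    hence 1: "- A - B * norm (z - a) \<le> fr z" by simp
    have "norm (z - a) \<le> norm (y - z) + norm (y - a)"
      using norm_triangle_ineq[of "z - y" "y - a"] by (simp add: norm_minus_commute)
    hence "B * norm (z - a) \<le> B * norm (y - z) + B * norm (y - a)"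
      using B by (simp add: mult_left_mono flip: distrib_left)
    moreover have "B * norm (y - z) \<le> c * (norm (y - z))^2 + B^2/(4*c)" by (rule sq_bound[OF c])
    ultimately show ?thesis using 1 unfolding \<phi>_def L_def by linarith
  qed
  have Dne: "D \<noteq> {}" using a D_def by auto
  define S where "S = \<phi> ` D"
  have Sne: "S \<noteq> {}" using Dne S_def by auto
  have Sbdd: "bdd_below S" unfolding S_def bdd_below_def using low by auto
  define m where "m = Inf S"
  have mle: "m \<le> \<phi> z" if "z \<in> D" for z unfolding m_def using cInf_lower[OF _ Sbdd] that S_def by auto
  have "\<exists>z. z \<in> D \<and> \<phi> z < m + 1/(Suc n)" for n :: nat
  proof -
    have "Inf S < m + 1/(Suc n)" unfolding m_def by simp
    then obtain s where "s \<in> S" "s < m + 1/Suc n" using cInf_less_iff[OF Sne Sbdd] by blast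
    thus ?thesis unfolding S_def by auto
  qed
  then obtain zs where zs: "\<And>n. zs n \<in> D" "\<And>n. \<phi> (zs n) < m + 1/(Suc n)" by metis
  have mid: "c * (norm (z1 - z2))^2 / 4 \<le> (\<phi> z1 - m)/2 + (\<phi> z2 - m)/2" if "z1 \<in> D" "z2 \<in> D" for z1 z2
  proof -
    define w where "w = (1 - 1/2) *\<^sub>R z1 + (1/2::real) *\<^sub>R z2"
    have fw0: "f w \<le> ereal ((1 - 1/2) * fr z1 + (1/2) * fr z2)" unfolding w_def
      by (rule conv_real[OF f frE frE]) (use that D_def in auto)
    hence wD: "w \<in> D" unfolding D_def by auto
    hence fw: "fr w \<le> fr z1/2 + fr z2/2" using fw0 frE[of w] D_def by simp
    have "m \<le> \<phi> w" by (rule mle[OF wD])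
    also have "\<phi> w = fr w + c * ((norm (y-z1))^2/2 + (norm (y-z2))^2/2 - (norm (z1 - z2))^2/4)"
      unfolding \<phi>_def w_def mid_id ..
    finally have "m \<le> fr w + c * ((norm (y-z1))^2/2 + (norm (y-z2))^2/2 - (norm (z1 - z2))^2/4)" .
    hence "m \<le> fr w + c * (norm (y-z1))^2/2 + c * (norm (y-z2))^2/2 - c * (norm (z1 - z2))^2/4"
      by (simp add: algebra_simps)
    thus ?thesis using fw unfolding \<phi>_def by (simp add: add_divide_distrib diff_divide_distrib)
  qed
  have cau: "Cauchy zs"
  proof (rule metric_CauchyI)
    fix e :: real assume e: "0 < e"
    obtain M :: nat where M: "4 / (c * e^2) < real M" using reals_Archimedean2 by blast
    show "\<exists>M. \<forall>m'\<ge>M. \<forall>n\<ge>M. dist (zs m') (zs n) < e"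
    proof (intro exI allI impI)
      fix i j assume ij: "M \<le> i" "M \<le> j"
      have "c * (norm (zs i - zs j))^2 / 4 \<le> (\<phi> (zs i) - m)/2 + (\<phi> (zs j) - m)/2"
        by (rule mid[OF zs(1) zs(1)])
      also have "\<dots> \<le> 1/(Suc i)/2 + 1/(Suc j)/2"
        using zs(2)[of i] zs(2)[of j] by (intro add_mono divide_right_mono) (simp_all add: less_imp_le)
      also have "\<dots> \<le> 1/(Suc M)/2 + 1/(Suc M)/2"
        using ij by (intro add_mono divide_right_mono) (auto simp: frac_le)
      also have "\<dots> = 1/(Suc M)" by (rule field_sum_of_halves)
      finally have h: "c * (norm (zs i - zs j))^2 / 4 \<le> 1 / Suc M" .
      have "(norm (zs i - zs j))^2 = (c * (norm (zs i - zs j))^2 / 4) * (4 / c)" using c by simp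
      also have "\<dots> \<le> (1 / Suc M) * (4 / c)" using h c by (intro mult_right_mono) auto
      also have "\<dots> = 4/(c * Suc M)" by simp
      finally have "(norm (zs i - zs j))^2 \<le> 4/(c * Suc M)" .
      also have "\<dots> < e^2"
      proof -
        have ce: "0 < c * e^2" using c e by simp
        have "4 < real M * (c * e^2)" using M ce by (simp add: divide_less_eq)
        hence "4 < real (Suc M) * (c * e^2)" using ce by (simp add: distrib_right)
        hence "4 < e^2 * (c * real (Suc M))" by (simp add: algebra_simps)
        moreover have pos: "0 < c * real (Suc M)" using c by simp
        ultimately show ?thesis using pos_divide_less_eq[OF pos] by simp
      qed
      finally show "dist (zs i) (zs j) < e" using e by (simp add: dist_norm power_less_imp_less_base)
    qed
  qed
  then obtain p where lim: "zs \<longlonglongrightarrow> p" using Cauchy_convergent convergent_def by blast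
  have nlim: "(\<lambda>n. c * (norm (y - zs n))^2) \<longlonglongrightarrow> c * (norm (y - p))^2" by (intro tendsto_intros lim)
  have fp: "f p \<le> ereal (m - c * (norm (y - p))^2 + 2*\<epsilon>)" if \<epsilon>: "0 < \<epsilon>" for \<epsilon>
  proof (rule lsc_lim[OF f lim])
    obtain N1 :: nat where N1: "1/\<epsilon> < real N1" using reals_Archimedean2 by blast
    have "eventually (\<lambda>n. dist (c * (norm (y - zs n))^2) (c * (norm (y - p))^2) < \<epsilon>) sequentially"
      by (rule tendstoD[OF nlim \<epsilon>])
    then obtain N2 where N2: "\<And>n. n \<ge> N2 \<Longrightarrow> \<bar>c * (norm (y - zs n))^2 - c * (norm (y - p))^2\<bar> < \<epsilon>"
      by (auto simp: eventually_sequentially dist_real_def)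
    show "eventually (\<lambda>n. f (zs n) \<le> ereal (m - c * (norm (y - p))^2 + 2*\<epsilon>)) sequentially"
      unfolding eventually_sequentially
    proof (intro exI[of _ "max N1 N2"] allI impI)
      fix n assume n: "max N1 N2 \<le> n"
      have 1: "fr (zs n) < m + 1/Suc n - c * (norm (y - zs n))^2" using zs(2)[of n] unfolding \<phi>_def by simp
      have "1/\<epsilon> < real (Suc n)" using N1 n by simp
      hence 2: "1/Suc n < \<epsilon>" using \<epsilon> by (simp add: field_simps)
      have 3: "c * (norm (y - p))^2 - \<epsilon> < c * (norm (y - zs n))^2" using N2[of n] n by simp
      have "fr (zs n) \<le> m - c * (norm (y - p))^2 + 2*\<epsilon>" using 1 2 3 by linarith
      thus "f (zs n) \<le> ereal (m - c * (norm (y - p))^2 + 2*\<epsilon>)" using frE[of "zs n"] zs(1)[of n] D_def by simp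
    qed
  qed
  have "f p \<noteq> \<infinity>" using fp[of 1] by auto
  hence fpE: "f p = ereal (fr p)" by (rule frE)
  have fpm: "fr p \<le> m - c * (norm (y - p))^2"
  proof (rule field_le_epsilon)
    fix e :: real assume "0 < e"
    hence "f p \<le> ereal (m - c * (norm (y - p))^2 + 2*(e/2))" by (intro fp) simp
    thus "fr p \<le> m - c * (norm (y - p))^2 + e" using fpE by simp
  qed
  have "f p + ereal (c * (norm (y - p))^2) \<le> f z + ereal (c * (norm (y - z))^2)" for z
  proof (cases "z \<in> D")
    case True
    have "fr p + c * (norm (y - p))^2 \<le> \<phi> z" using fpm mle[OF True] by simp
    thus ?thesis using fpE frE[of z] True D_def unfolding \<phi>_def by simp
  next
    case False thus ?thesis unfolding D_def by simp
  qed
  thus ?thesis using \<open>f p \<noteq> \<infinity>\<close> by blast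
qed
lemma small_t:
  fixes u K :: real
  assumes K: "0 \<le> K" and h: "\<And>t. 0 < t \<Longrightarrow> t \<le> 1 \<Longrightarrow> u \<le> t * K"
  shows "u \<le> 0"
proof (rule ccontr)
  assume "\<not> u \<le> 0" hence u: "0 < u" by simp
  define t where "t = min 1 (u / (2 * K + 2))"
  have t: "0 < t" "t \<le> 1" using u K unfolding t_def by auto
  have "t * K \<le> (u / (2 * K + 2)) * K" using K unfolding t_def by (intro mult_right_mono) auto
  also have "\<dots> < u" using u K by (auto simp: field_simps intro!: add_nonneg_pos)
  finally show False using h[OF t] by simp
qed

lemma min_unique:
  fixes f :: "'a::{real_inner,complete_space} \<Rightarrow> ereal"
  assumes f: "f \<in> Gamma0"
    and m1: "\<forall>z. f p1 + ereal ((norm (x - p1))^2 / 2) \<le> f z + ereal ((norm (x - z))^2 / 2)"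
    and m2: "\<forall>z. f p2 + ereal ((norm (x - p2))^2 / 2) \<le> f z + ereal ((norm (x - z))^2 / 2)"
  shows "p1 = p2"
proof -
  obtain a where a: "f a \<noteq> \<infinity>" using G0D(2)[OF f] by blast
  have "f p1 \<noteq> \<infinity>" using m1[rule_format, of a] a by auto
  then obtain r1 where r1: "f p1 = ereal r1" using fin_real[OF f] by blast
  have "f p2 \<noteq> \<infinity>" using m2[rule_format, of a] a by auto
  then obtain r2 where r2: "f p2 = ereal r2" using fin_real[OF f] by blast
  have e12: "r1 + (norm (x - p1))^2 / 2 \<le> r2 + (norm (x - p2))^2 / 2" using m1[rule_format, of p2] r1 r2 by simp
  have e21: "r2 + (norm (x - p2))^2 / 2 \<le> r1 + (norm (x - p1))^2 / 2" using m2[rule_format, of p1] r1 r2 by simp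
  define w where "w = (1 - 1/2) *\<^sub>R p1 + (1/2::real) *\<^sub>R p2"
  have fw0: "f w \<le> ereal ((1 - 1/2) * r1 + (1/2) * r2)" unfolding w_def
    by (rule conv_real[OF f r1 r2]) auto
  have "f p1 + ereal ((norm (x - p1))^2 / 2) \<le> f w + ereal ((norm (x - w))^2 / 2)" using m1 by blast
  also have "\<dots> \<le> ereal ((1 - 1/2) * r1 + (1/2) * r2) + ereal ((norm (x - w))^2 / 2)"
    by (rule add_right_mono[OF fw0])
  finally have h: "r1 + (norm (x - p1))^2 / 2 \<le> (1 - 1/2) * r1 + (1/2) * r2 + (norm (x - w))^2 / 2"
    using r1 by simp
  have "(norm (x - w))^2 = (norm (x-p1))^2/2 + (norm(x-p2))^2/2 - (norm (p1 - p2))^2/4"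
    unfolding w_def by (rule mid_id)
  hence h2: "(norm (x - w))^2 / 2 = (norm (x-p1))^2/4 + (norm(x-p2))^2/4 - (norm (p1 - p2))^2/8" by simp
  have h': "r1 + (norm (x - p1))^2 / 2 \<le> r1 / 2 + r2 / 2 + (norm (x - w))^2 / 2" using h by simp
  have "(norm (p1 - p2))^2 \<le> 0" using h' h2 e21 by linarith
  thus ?thesis by simp
qed

lemma prox_char:
  fixes f :: "'a::{real_inner,complete_space} \<Rightarrow> ereal"
  assumes f: "f \<in> Gamma0"
  shows "\<forall>z. f (prox f x) + ereal ((norm (x - prox f x))^2 / 2) \<le> f z + ereal ((norm (x - z))^2 / 2)"
proof -
  obtain p where "f p \<noteq> \<infinity>" and p: "\<forall>z. f p + ereal ((1/2) * (norm (x - p))^2) \<le> f z + ereal ((1/2) * (norm (x - z))^2)"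
    using prox_exists[OF f, of "1/2" x] by auto
  hence p': "\<forall>z. f p + ereal ((norm (x - p))^2 / 2) \<le> f z + ereal ((norm (x - z))^2 / 2)" by simp
  have "prox f x = p" unfolding prox_def
    apply (rule the_equality)
     apply (rule p')
    using min_unique[OF f _ p'] by blast
  thus ?thesis using p' by simp
qed

lemma prox_eq:
  fixes f :: "'a::{real_inner,complete_space} \<Rightarrow> ereal"
  assumes f: "f \<in> Gamma0"
    and p: "\<forall>z. f p + ereal ((norm (x - p))^2 / 2) \<le> f z + ereal ((norm (x - z))^2 / 2)"
  shows "prox f x = p"
  using min_unique[OF f prox_char[OF f] p] .

lemma prox_fin:
  fixes f :: "'a::{real_inner,complete_space} \<Rightarrow> ereal"
  assumes f: "f \<in> Gamma0"
  shows "f (prox f x) \<noteq> \<infinity>"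
proof -
  obtain a where a: "f a \<noteq> \<infinity>" using G0D(2)[OF f] by blast
  have "f (prox f x) + ereal ((norm (x - prox f x))^2 / 2) \<le> f a + ereal ((norm (x - a))^2 / 2)"
    using prox_char[OF f, of x] by blast
  also have "\<dots> < \<infinity>" using a by simp
  finally show ?thesis by auto
qed

lemma nsq_diff_scale: "(norm (u - t *\<^sub>R v))^2 = (norm u)^2 - 2 * t * (u \<bullet> v) + t^2 * (norm v)^2"
  for u v :: "'a::real_inner"
  by (simp add: nsq_diff power_mult_distrib)

lemma var_ineq:
  fixes f :: "'a::{real_inner,complete_space} \<Rightarrow> ereal"
  assumes f: "f \<in> Gamma0" and c: "0 < c" and fp: "f p = ereal a"
    and mn: "\<forall>z. f p + ereal (c * (norm (y - p))^2) \<le> f z + ereal (c * (norm (y - z))^2)"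
    and fz: "f z = ereal b"
  shows "a + 2 * c * ((y - p) \<bullet> (z - p)) \<le> b"
proof -
  have "a + 2 * c * ((y - p) \<bullet> (z - p)) - b \<le> 0"
  proof (rule small_t)
    show "0 \<le> c * (norm (z - p))^2" using c by simp
    fix t :: real assume t: "0 < t" "t \<le> 1"
    define zt where "zt = (1 - t) *\<^sub>R p + t *\<^sub>R z"
    have fzt: "f zt \<le> ereal ((1 - t) * a + t * b)" unfolding zt_def by (rule conv_real[OF f fp fz]) (use t in auto)
    have "f p + ereal (c * (norm (y - p))^2) \<le> f zt + ereal (c * (norm (y - zt))^2)" using mn by blast
    also have "\<dots> \<le> ereal ((1 - t) * a + t * b) + ereal (c * (norm (y - zt))^2)" by (rule add_right_mono[OF fzt])
    finally have 1: "a + c * (norm (y - p))^2 \<le> (1 - t) * a + t * b + c * (norm (y - zt))^2" using fp by simp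
    have "y - zt = (y - p) - t *\<^sub>R (z - p)" unfolding zt_def by (simp add: algebra_simps)
    hence "(norm (y - zt))^2 = (norm (y - p))^2 - 2 * t * ((y - p) \<bullet> (z - p)) + t^2 * (norm (z - p))^2"
      by (simp only: nsq_diff_scale)
    with 1 have "t * a \<le> t * b - 2 * c * t * ((y - p) \<bullet> (z - p)) + c * t^2 * (norm (z - p))^2"
      by (simp add: algebra_simps)
    hence "t * (a + 2 * c * ((y - p) \<bullet> (z - p)) - b) \<le> t * (t * (c * (norm (z - p))^2))"
      by (simp add: algebra_simps power2_eq_square)
    thus "a + 2 * c * ((y - p) \<bullet> (z - p)) - b \<le> t * (c * (norm (z - p))^2)" using t by simp
  qed
  thus ?thesis by simp
qed
definition fr :: "('a \<Rightarrow> ereal) \<Rightarrow> 'a \<Rightarrow> real" where "fr f z = real_of_ereal (f z)"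

definition Fm :: "('a::real_inner \<Rightarrow> ereal) \<Rightarrow> 'a \<Rightarrow> 'a \<Rightarrow> real" where
  "Fm f x0 x = (norm (x - x0))^2/2 - (fr f (prox f x) + (norm (x - prox f x))^2/2)"

lemma frE: "f \<in> Gamma0 \<Longrightarrow> f z \<noteq> \<infinity> \<Longrightarrow> f z = ereal (fr f z)"
  unfolding fr_def using fin_real by blast

lemma prox_real:
  fixes f :: "'a::{real_inner,complete_space} \<Rightarrow> ereal"
  assumes f: "f \<in> Gamma0" and z: "f z \<noteq> \<infinity>"
  shows "fr f (prox f x) + (norm (x - prox f x))^2 / 2 \<le> fr f z + (norm (x - z))^2 / 2"
  using prox_char[OF f, of x] frE[OF f prox_fin[OF f]] frE[OF f z]
  by (metis ereal_less_eq(3) plus_ereal.simps(1))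

lemma id4: "(norm (y - x0))^2 - (norm (y - p))^2 - (norm (x - x0))^2 + (norm (x - p))^2 = 2 * ((p - x0) \<bullet> (y - x))"
  for x y x0 p :: "'a::real_inner"
  by (simp add: power2_norm_eq_inner inner_diff_left inner_diff_right inner_commute algebra_simps)

lemma F1:
  fixes f :: "'a::{real_inner,complete_space} \<Rightarrow> ereal"
  assumes f: "f \<in> Gamma0"
  shows "Fm f x0 x + (prox f x - x0) \<bullet> (y - x) \<le> Fm f x0 y"
proof -
  have "fr f (prox f y) + (norm (y - prox f y))^2 / 2 \<le> fr f (prox f x) + (norm (y - prox f x))^2 / 2"
    by (rule prox_real[OF f prox_fin[OF f]])
  thus ?thesis unfolding Fm_def using id4[of y x0 "prox f x" x] by (simp add: algebra_simps)
qed

lemma F2: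
  fixes f :: "'a::{real_inner,complete_space} \<Rightarrow> ereal"
  assumes f: "f \<in> Gamma0" and x0: "f x0 \<noteq> \<infinity>"
  shows "- fr f x0 \<le> Fm f x0 x"
  using prox_real[OF f x0, of x] unfolding Fm_def by simp

lemma F3:
  fixes f :: "'a::{real_inner,complete_space} \<Rightarrow> ereal"
  assumes f: "f \<in> Gamma0"
  shows "(norm (prox f x - prox f y))^2 \<le> (x - y) \<bullet> (prox f x - prox f y)"
proof -
  have m: "\<forall>z. f (prox f w) + ereal ((1/2) * (norm (w - prox f w))^2) \<le> f z + ereal ((1/2) * (norm (w - z))^2)" for w
    using prox_char[OF f, of w] by simp
  have a: "fr f (prox f x) + 2 * (1/2) * ((x - prox f x) \<bullet> (prox f y - prox f x)) \<le> fr f (prox f y)"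
    by (rule var_ineq[OF f _ frE[OF f prox_fin[OF f]] m frE[OF f prox_fin[OF f]]]) simp
  have b: "fr f (prox f y) + 2 * (1/2) * ((y - prox f y) \<bullet> (prox f x - prox f y)) \<le> fr f (prox f x)"
    by (rule var_ineq[OF f _ frE[OF f prox_fin[OF f]] m frE[OF f prox_fin[OF f]]]) simp
  have "(x - prox f x) \<bullet> (prox f y - prox f x) + (y - prox f y) \<bullet> (prox f x - prox f y) \<le> 0"
    using a b by simp
  moreover have "(x - prox f x) \<bullet> (prox f y - prox f x) + (y - prox f y) \<bullet> (prox f x - prox f y)
     = (norm (prox f x - prox f y))^2 - (x - y) \<bullet> (prox f x - prox f y)"
    by (simp add: power2_norm_eq_inner inner_diff_left inner_diff_right inner_commute algebra_simps)
  ultimately show ?thesis by simp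
qed

lemma nonexp:
  fixes f :: "'a::{real_inner,complete_space} \<Rightarrow> ereal"
  assumes f: "f \<in> Gamma0"
  shows "norm (prox f x - prox f y) \<le> norm (x - y)"
proof (cases "prox f x = prox f y")
  case True then show ?thesis by simp
next
  case False
  have "(norm (prox f x - prox f y))^2 \<le> (x - y) \<bullet> (prox f x - prox f y)" by (rule F3[OF f])
  also have "\<dots> \<le> norm (x - y) * norm (prox f x - prox f y)" by (rule real_inner_class.Cauchy_Schwarz_ineq2[THEN abs_le_D1])
  finally have "norm (prox f x - prox f y) * norm (prox f x - prox f y) \<le> norm (x - y) * norm (prox f x - prox f y)"
    by (simp add: power2_eq_square)
  thus ?thesis using False by simp
qed

lemma F4:
  "Fm f x0 x + fr f x0 = (x - x0) \<bullet> (prox f x - x0) - (norm (prox f x - x0))^2/2 + fr f x0 - fr f (prox f x)"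
  unfolding Fm_def
  by (simp add: power2_norm_eq_inner inner_diff_left inner_diff_right inner_commute field_simps)
locale desc =
  fixes f g :: "'a::{real_inner,complete_space} \<Rightarrow> ereal" and x0 x :: 'a and \<tau> :: real
  assumes f: "f \<in> Gamma0" and g: "g \<in> Gamma0" and x0f: "f x0 \<noteq> \<infinity>" and x0g: "g x0 \<noteq> \<infinity>"
    and eq: "\<And>z. norm (prox f z - x0) = norm (prox g z - x0)"
    and tau: "0 < \<tau>" "\<tau> \<le> 1/2"
begin

definition xs :: "nat \<Rightarrow> 'a" where "xs = rec_nat x (\<lambda>k z. z - \<tau> *\<^sub>R (prox f z - x0))"
definition u where "u k = prox f (xs k) - x0"
definition v where "v k = prox g (xs k) - x0"
definition C where "C = Fm f x0 x + fr f x0"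

lemma xs0: "xs 0 = x" by (simp add: xs_def)
lemma xsS: "xs (Suc k) = xs k - \<tau> *\<^sub>R u k" by (simp add: xs_def u_def)
lemma uv: "norm (v k) = norm (u k)" unfolding u_def v_def using eq by simp

lemma s1: "norm (u k - u (Suc k)) \<le> \<tau> * norm (u k)"
proof -
  have "u k - u (Suc k) = prox f (xs k) - prox f (xs (Suc k))" unfolding u_def by simp
  also have "norm \<dots> \<le> norm (xs k - xs (Suc k))" by (rule nonexp[OF f])
  also have "xs k - xs (Suc k) = \<tau> *\<^sub>R u k" unfolding xsS by simp
  finally show ?thesis using tau by simp
qed

lemma s3: "(1 - \<tau>) * (norm (u k))^2 \<le> u (Suc k) \<bullet> u k"
proof -
  have e: "u (Suc k) \<bullet> u k = (norm (u k))^2 - (u k - u (Suc k)) \<bullet> u k"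
    by (simp add: power2_norm_eq_inner inner_diff_left)
  have "(u k - u (Suc k)) \<bullet> u k \<le> norm (u k - u (Suc k)) * norm (u k)"
    by (rule real_inner_class.Cauchy_Schwarz_ineq2[THEN abs_le_D1])
  also have "\<dots> \<le> \<tau> * norm (u k) * norm (u k)" by (rule mult_right_mono[OF s1]) simp
  finally show ?thesis unfolding e by (simp add: algebra_simps power2_eq_square)
qed

lemma s2: "Fm f x0 (xs (Suc k)) \<le> Fm f x0 (xs k) - \<tau> * (u (Suc k) \<bullet> u k)"
proof -
  have "Fm f x0 (xs (Suc k)) + (prox f (xs (Suc k)) - x0) \<bullet> (xs k - xs (Suc k)) \<le> Fm f x0 (xs k)"
    by (rule F1[OF f])
  moreover have "xs k - xs (Suc k) = \<tau> *\<^sub>R u k" unfolding xsS by simp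
  ultimately show ?thesis unfolding u_def by simp
qed

lemma Fdec: "Fm f x0 (xs (Suc k)) \<le> Fm f x0 (xs k) - \<tau>/2 * (norm (u k))^2"
proof -
  have "\<tau> * ((1 - \<tau>) * (norm (u k))^2) \<le> \<tau> * (u (Suc k) \<bullet> u k)"
    using s3 tau by (intro mult_left_mono) auto
  moreover have "\<tau>/2 * (norm (u k))^2 \<le> \<tau> * ((1 - \<tau>) * (norm (u k))^2)"
  proof -
    have "1/2 \<le> 1 - \<tau>" using tau by simp
    hence "(1/2) * (norm (u k))^2 \<le> (1 - \<tau>) * (norm (u k))^2" by (intro mult_right_mono) auto
    thus ?thesis using tau by (simp add: mult_left_mono)
  qed
  ultimately show ?thesis using s2[of k] by linarith
qed

lemma s4: "Fm g x0 (xs k) - \<tau> * (norm (u k))^2 \<le> Fm g x0 (xs (Suc k))"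
proof -
  have "Fm g x0 (xs k) + (prox g (xs k) - x0) \<bullet> (xs (Suc k) - xs k) \<le> Fm g x0 (xs (Suc k))"
    by (rule F1[OF g])
  moreover have "xs (Suc k) - xs k = - (\<tau> *\<^sub>R u k)" unfolding xsS by simp
  moreover have "v k \<bullet> u k \<le> norm (u k) * norm (u k)"
    using real_inner_class.Cauchy_Schwarz_ineq2[THEN abs_le_D1, of "v k" "u k"] uv by simp
  hence "\<tau> * (v k \<bullet> u k) \<le> \<tau> * (norm (u k))^2" using tau by (simp add: mult_left_mono power2_eq_square)
  ultimately show ?thesis unfolding v_def[symmetric] by simp
qed

lemma Phi_step: "(Fm f x0 (xs (Suc k)) - Fm g x0 (xs (Suc k))) + 2 * \<tau> * Fm f x0 (xs (Suc k))
   \<le> (Fm f x0 (xs k) - Fm g x0 (xs k)) + 2 * \<tau> * Fm f x0 (xs k)"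
proof -
  have a: "\<tau> * ((1 - \<tau>) * (norm (u k))^2) \<le> \<tau> * (u (Suc k) \<bullet> u k)"
    using s3 tau by (intro mult_left_mono) auto
  have b: "2 * \<tau> * Fm f x0 (xs (Suc k)) \<le> 2 * \<tau> * (Fm f x0 (xs k) - \<tau>/2 * (norm (u k))^2)"
    using Fdec tau by (intro mult_left_mono) auto
  have e1: "\<tau> * ((1 - \<tau>) * (norm (u k))^2) = \<tau> * (norm (u k))^2 - \<tau> * \<tau> * (norm (u k))^2"
    by (simp add: algebra_simps)
  have e2: "2 * \<tau> * (Fm f x0 (xs k) - \<tau>/2 * (norm (u k))^2) = 2 * \<tau> * Fm f x0 (xs k) - \<tau> * \<tau> * (norm (u k))^2"
    by (simp add: algebra_simps)
  show ?thesis using a b e1 e2 s2[of k] s4[of k] by linarith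
qed

lemma Phi_le: "(Fm f x0 (xs n) - Fm g x0 (xs n)) + 2 * \<tau> * Fm f x0 (xs n)
   \<le> (Fm f x0 x - Fm g x0 x) + 2 * \<tau> * Fm f x0 x"
proof (induction n)
  case 0 then show ?case by (simp add: xs0)
next
  case (Suc n) then show ?case using Phi_step[of n] by linarith
qed

lemma udec: "norm (u (Suc k)) \<le> norm (u k)"
proof -
  define d where "d = u k - u (Suc k)"
  have "(norm d)^2 \<le> (xs k - xs (Suc k)) \<bullet> d"
    using F3[OF f, of "xs k" "xs (Suc k)"] unfolding d_def u_def by simp
  also have "xs k - xs (Suc k) = \<tau> *\<^sub>R u k" unfolding xsS by simp
  finally have h: "(norm d)^2 \<le> \<tau> * (u k \<bullet> d)" by simp
  have "0 \<le> \<tau> * (u k \<bullet> d)" using h by (rule order_trans[OF zero_le_power2])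
  hence h0: "0 \<le> u k \<bullet> d" using tau by (simp add: zero_le_mult_iff)
  have "(norm (u (Suc k)))^2 = (norm (u k - d))^2" unfolding d_def by simp
  also have "\<dots> = (norm (u k))^2 - 2 * (u k \<bullet> d) + (norm d)^2" by (rule nsq_diff)
  also have "\<dots> \<le> (norm (u k))^2 - 2 * (u k \<bullet> d) + \<tau> * (u k \<bullet> d)" using h by simp
  also have "\<dots> \<le> (norm (u k))^2"
  proof -
    have "\<tau> * (u k \<bullet> d) \<le> 2 * (u k \<bullet> d)" using tau h0 by (intro mult_right_mono) auto
    thus ?thesis by simp
  qed
  finally show ?thesis by (simp add: power2_le_iff_abs_le)
qed

lemma udec': "m \<le> n \<Longrightarrow> norm (u n) \<le> norm (u m)"
  by (induction n rule: dec_induct) (auto intro: order_trans[OF udec])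

lemma tail: "M \<le> N \<Longrightarrow> Fm f x0 (xs N) + \<tau>/2 * real (N - M) * (norm (u N))^2 \<le> Fm f x0 (xs M)"
proof (induction N rule: dec_induct)
  case base then show ?case by simp
next
  case (step n)
  define X where "X = (norm (u n))^2"
  define Y where "Y = (norm (u (Suc n)))^2"
  define a where "a = real (n - M)"
  have 3: "real (Suc n - M) = a + 1" unfolding a_def using step.hyps by (simp add: Suc_diff_le)
  have "Y \<le> X" unfolding X_def Y_def using udec[of n] by (simp add: power_mono)
  hence 1: "\<tau>/2 * (a+1) * Y \<le> \<tau>/2 * (a+1) * X" using tau unfolding a_def by (intro mult_left_mono) auto
  have 2: "\<tau>/2 * (a+1) * X = \<tau>/2 * X + \<tau>/2 * a * X" by (simp add: algebra_simps)
  have "Fm f x0 (xs (Suc n)) + \<tau>/2 * (a+1) * Y \<le> Fm f x0 (xs (Suc n)) + \<tau>/2 * (a+1) * X" using 1 by simp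
  also have "\<dots> = (Fm f x0 (xs (Suc n)) + \<tau>/2 * X) + \<tau>/2 * a * X" using 2 by simp
  also have "\<dots> \<le> Fm f x0 (xs n) + \<tau>/2 * a * X" using Fdec[of n] unfolding X_def by simp
  also have "\<dots> \<le> Fm f x0 (xs M)" using step.IH unfolding a_def X_def by simp
  finally show ?case unfolding 3 Y_def .
qed

lemma sumb: "Fm f x0 (xs N) + \<tau>/2 * (\<Sum>k<N. (norm (u k))^2) \<le> Fm f x0 x"
proof (induction N)
  case 0 then show ?case by (simp add: xs0)
next
  case (Suc N) then show ?case using Fdec[of N] by (simp add: algebra_simps)
qed

lemma disp: "norm (xs N - x) \<le> \<tau> * (\<Sum>k<N. norm (u k))"
proof (induction N)
  case 0 then show ?case by (simp add: xs0)
next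
  case (Suc N)
  have "norm (xs (Suc N) - x) \<le> norm (xs N - x) + norm (\<tau> *\<^sub>R u N)"
    unfolding xsS using norm_triangle_ineq4[of "xs N - x" "\<tau> *\<^sub>R u N"] by (simp add: algebra_simps)
  also have "\<dots> \<le> \<tau> * (\<Sum>k<N. norm (u k)) + \<tau> * norm (u N)" using Suc tau by simp
  finally show ?case by (simp add: algebra_simps)
qed

lemma Flow: "- fr f x0 \<le> Fm f x0 z" by (rule F2[OF f x0f])
lemma Glow: "- fr g x0 \<le> Fm g x0 z" by (rule F2[OF g x0g])

lemma disp2: "(norm (xs N - x))^2 \<le> 2 * \<tau> * real N * C"
proof -
  have cs: "(\<Sum>k<N. norm (u k) * 1)^2 \<le> (\<Sum>k<N. (norm (u k))^2) * (\<Sum>k<N. 1^2)"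
    by (rule Cauchy_Schwarz_ineq_sum)
  hence cs': "(\<Sum>k<N. norm (u k))^2 \<le> real N * (\<Sum>k<N. (norm (u k))^2)" by (simp add: mult.commute)
  have "\<tau>/2 * (\<Sum>k<N. (norm (u k))^2) = (\<tau> * (\<Sum>k<N. (norm (u k))^2)) / 2" by simp
  hence sb: "\<tau> * (\<Sum>k<N. (norm (u k))^2) \<le> 2 * C"
    using sumb[of N] Flow[of "xs N"] unfolding C_def by simp
  have "(norm (xs N - x))^2 \<le> (\<tau> * (\<Sum>k<N. norm (u k)))^2"
    using disp[of N] by (simp add: power_mono)
  also have "\<dots> = \<tau>^2 * (\<Sum>k<N. norm (u k))^2" by (simp add: power_mult_distrib)
  also have "\<dots> \<le> \<tau>^2 * (real N * (\<Sum>k<N. (norm (u k))^2))" using cs' by (simp add: mult_left_mono)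
  also have "\<dots> = \<tau> * real N * (\<tau> * (\<Sum>k<N. (norm (u k))^2))" by (simp add: power2_eq_square algebra_simps)
  also have "\<dots> \<le> \<tau> * real N * (2 * C)" using sb tau by (intro mult_left_mono) auto
  finally show ?thesis by (simp add: algebra_simps)
qed

end
context desc begin

lemma Fmono: "m \<le> n \<Longrightarrow> Fm f x0 (xs n) \<le> Fm f x0 (xs m)"
proof (induction n rule: dec_induct)
  case base then show ?case by simp
next
  case (step n)
  have "0 \<le> \<tau>/2 * (norm (u n))^2" using tau by simp
  then show ?case using Fdec[of n] step.IH by linarith
qed

lemma Cnn: "0 \<le> C" using Flow[of x] unfolding C_def by simp

lemma final_desc:
  assumes eta: "0 < \<eta>"
  shows "fr g x0 - fr f x0 \<le> Fm f x0 x - Fm g x0 x + 2 * \<tau> * C + 3 * \<eta>"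
proof -
  have gx0: "g x0 = ereal (fr g x0)" by (rule frE[OF g x0g])
  have "g x0 - ereal \<eta> < g x0" using gx0 eta by simp
  then obtain \<delta> where dpos: "\<delta> > 0" and dq: "\<And>q. dist q x0 < \<delta> \<Longrightarrow> g x0 - ereal \<eta> < g q"
    using lsc_nbhd[OF g] by blast
  have lscq: "fr g x0 - fr g q < \<eta>" if "norm (q - x0) < \<delta>" "g q \<noteq> \<infinity>" for q
    using dq[of q] that frE[OF g that(2)] gx0 by (simp add: dist_norm)
  define K where "K = 2/\<tau> + 2/\<tau> * (norm (x - x0))^2 + 8*C + 1"
  have Kpos: "0 < K" unfolding K_def using tau Cnn by (simp add: add_nonneg_pos)
  define \<theta> where "\<theta> = min (\<eta>^2) (\<delta>^2/2) / K"
  have thpos: "0 < \<theta>" unfolding \<theta>_def using Kpos eta dpos by simp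
  have thK: "\<theta> * K = min (\<eta>^2) (\<delta>^2/2)" unfolding \<theta>_def using Kpos by simp
  have K1: "2/\<tau> * \<theta> \<le> \<theta> * K" and K2: "2/\<tau> * (norm (x - x0))^2 * \<theta> \<le> \<theta> * K"
    and K3: "8 * C * \<theta> \<le> \<theta> * K"
    using thpos tau Cnn unfolding K_def by (simp_all add: algebra_simps mult_left_mono)
  define S where "S = range (\<lambda>n. Fm f x0 (xs n))"
  have Sbdd: "bdd_below S" unfolding S_def bdd_below_def using Flow by blast
  define L where "L = Inf S"
  have "L < L + \<theta>" using thpos by simp
  then obtain M0 where M0: "Fm f x0 (xs M0) < L + \<theta>"
    using cInf_less_iff[of S "L + \<theta>"] Sbdd unfolding L_def S_def by auto
  define M where "M = max M0 1"
  define N where "N = 2 * M"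
  have M1: "1 \<le> M" "M0 \<le> M" "M \<le> N" unfolding M_def N_def by auto
  have LN: "L \<le> Fm f x0 (xs N)" unfolding L_def S_def by (rule cInf_lower) (use Sbdd S_def in auto)
  have h1: "Fm f x0 (xs M) - Fm f x0 (xs N) < \<theta>" using Fmono[OF M1(2)] M0 LN by linarith
  have NM: "N - M = M" unfolding N_def by simp
  have "\<tau>/2 * real M * (norm (u N))^2 < \<theta>" using tail[OF M1(3)] h1 unfolding NM by linarith
  hence a: "\<tau> * real M * (norm (u N))^2 \<le> 2 * \<theta>" by simp
  have a1: "\<tau> * (norm (u N))^2 \<le> 2 * \<theta>"
  proof -
    have nn: "0 \<le> \<tau> * (norm (u N))^2" using tau by simp
    have "\<tau> * (norm (u N))^2 * 1 \<le> \<tau> * (norm (u N))^2 * real M"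
      by (rule mult_left_mono[OF _ nn]) (use M1(1) in simp)
    thus ?thesis using a by (simp add: algebra_simps)
  qed
  have uN2: "(norm (u N))^2 \<le> 2/\<tau> * \<theta>" using a1 tau by (simp add: field_simps)
  have d2: "(norm (xs N - x))^2 \<le> 4 * \<tau> * real M * C" using disp2[of N] unfolding N_def by simp
  have "(norm (xs N - x) * norm (u N))^2 = (norm (xs N - x))^2 * (norm (u N))^2" by (simp add: power_mult_distrib)
  also have "\<dots> \<le> (4 * \<tau> * real M * C) * (norm (u N))^2" using d2 by (simp add: mult_right_mono)
  also have "\<dots> = 4 * C * (\<tau> * real M * (norm (u N))^2)" by (simp add: algebra_simps)
  also have "\<dots> \<le> 4 * C * (2 * \<theta>)" by (rule mult_left_mono[OF a]) (use Cnn in simp)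
  also have "\<dots> \<le> \<eta>^2" using K3 thK by linarith
  finally have p1: "norm (xs N - x) * norm (u N) \<le> \<eta>"
    by (rule power2_le_imp_le) (use eta in simp)
  have "(norm (x - x0) * norm (u N))^2 = (norm (x - x0))^2 * (norm (u N))^2" by (simp add: power_mult_distrib)
  also have "\<dots> \<le> (norm (x - x0))^2 * (2/\<tau> * \<theta>)" by (rule mult_left_mono[OF uN2]) simp
  also have "\<dots> \<le> \<eta>^2" using K2 thK by (simp add: algebra_simps)
  finally have p2: "norm (x - x0) * norm (u N) \<le> \<eta>"
    by (rule power2_le_imp_le) (use eta in simp)
  have k1: "2/\<tau> * \<theta> \<le> \<delta>^2/2" using K1 thK by linarith
  have k2: "0 < 2/\<tau> * \<theta>" using thpos tau by simp
  have "(norm (u N))^2 < \<delta>^2" using uN2 k1 k2 by linarith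
  hence uNd: "norm (u N) < \<delta>" using dpos by (simp add: power_less_imp_less_base)
  have gq: "fr g x0 - fr g (prox g (xs N)) < \<eta>"
    by (rule lscq) (use uNd uv[of N] prox_fin[OF g] in \<open>auto simp: v_def\<close>)
  have inn: "(xs N - x0) \<bullet> v N \<le> 2 * \<eta>"
  proof -
    have "(xs N - x0) \<bullet> v N \<le> norm (xs N - x0) * norm (v N)"
      by (rule real_inner_class.Cauchy_Schwarz_ineq2[THEN abs_le_D1])
    also have "\<dots> = norm (xs N - x0) * norm (u N)" using uv by simp
    also have "\<dots> \<le> (norm (xs N - x) + norm (x - x0)) * norm (u N)"
      using norm_triangle_ineq[of "xs N - x" "x - x0"] by (simp add: mult_right_mono)
    finally show ?thesis using p1 p2 by (simp add: algebra_simps)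
  qed
  have G4: "Fm g x0 (xs N) + fr g x0 = (xs N - x0) \<bullet> v N - (norm (v N))^2/2 + fr g x0 - fr g (prox g (xs N))"
    unfolding v_def by (rule F4)
  have "0 \<le> (norm (v N))^2/2" by simp
  hence Gs: "Fm g x0 (xs N) + fr g x0 \<le> 3 * \<eta>" using G4 inn gq by linarith
  have "- fr f x0 \<le> Fm f x0 (xs N)" by (rule Flow)
  moreover have "2 * \<tau> * (- fr f x0) \<le> 2 * \<tau> * Fm f x0 (xs N)" using Flow tau by (intro mult_left_mono) auto
  ultimately show ?thesis using Phi_le[of N] Gs unfolding C_def by (simp add: algebra_simps)
qed

end
lemma main_dir:
  fixes f g :: "'a::{real_inner,complete_space} \<Rightarrow> ereal"
  assumes f: "f \<in> Gamma0" and g: "g \<in> Gamma0" and x0f: "f x0 \<noteq> \<infinity>" and x0g: "g x0 \<noteq> \<infinity>"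
    and eq: "\<And>z. norm (prox f z - x0) = norm (prox g z - x0)"
  shows "fr g x0 - fr f x0 \<le> Fm f x0 x - Fm g x0 x"
proof (rule field_le_epsilon)
  fix e :: real assume e: "0 < e"
  define C0 where "C0 = Fm f x0 x + fr f x0"
  have C0nn: "0 \<le> C0" using F2[OF f x0f, of x] unfolding C0_def by simp
  define \<tau> where "\<tau> = min (1/2) (e / (4 * (C0 + 1)))"
  have tau1: "\<tau> \<le> 1/2" unfolding \<tau>_def by (rule min.cobounded1)
  have tau0: "0 < \<tau>" unfolding \<tau>_def using e C0nn by simp
  note tau = tau0 tau1
  interpret desc f g x0 x \<tau> using f g x0f x0g eq tau by unfold_locales auto
  have 1: "fr g x0 - fr f x0 \<le> Fm f x0 x - Fm g x0 x + 2 * \<tau> * desc.C f x0 x + 3 * (e/6)"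
    by (rule final_desc) (use e in simp)
  have "2 * \<tau> * C0 \<le> 2 * (e / (4 * (C0 + 1))) * C0" using C0nn tau unfolding \<tau>_def by (intro mult_right_mono) auto
  also have "\<dots> \<le> e/2" using e C0nn by (simp add: field_simps)
  finally have "2 * \<tau> * C0 \<le> e/2" .
  moreover have "desc.C f x0 x = C0" unfolding C0_def desc.C_def[OF desc_axioms] ..
  ultimately show "fr g x0 - fr f x0 \<le> Fm f x0 x - Fm g x0 x + e" using 1 by simp
qed

lemma PQ_eq:
  fixes f g :: "'a::{real_inner,complete_space} \<Rightarrow> ereal"
  assumes f: "f \<in> Gamma0" and g: "g \<in> Gamma0"
    and D: "\<And>x. Fm f x0 x - Fm g x0 x = c"
  shows "prox f x = prox g x"
proof -
  define w where "w = prox f x - prox g x"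
  define y where "y = x + (1/2) *\<^sub>R w"
  have a: "Fm f x0 x + (prox f x - x0) \<bullet> (y - x) \<le> Fm f x0 y" by (rule F1[OF f])
  have b: "Fm g x0 y + (prox g y - x0) \<bullet> (x - y) \<le> Fm g x0 x" by (rule F1[OF g])
  have "Fm f x0 y - Fm f x0 x = Fm g x0 y - Fm g x0 x" using D[of x] D[of y] by simp
  hence "(prox f x - x0) \<bullet> (y - x) \<le> (prox g y - x0) \<bullet> (y - x)" using a b
    by (simp add: inner_diff_right inner_minus_right algebra_simps)
  hence "(1/2) * ((prox f x - prox g y) \<bullet> w) \<le> 0" unfolding y_def by (simp add: inner_diff_left)
  hence c: "(prox f x - prox g y) \<bullet> w \<le> 0" by simp
  have "prox f x - prox g y = w + (prox g x - prox g y)" unfolding w_def by simp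
  hence "(norm w)^2 \<le> (prox g y - prox g x) \<bullet> w" using c by (simp add: inner_add_left inner_diff_left power2_norm_eq_inner)
  also have "\<dots> \<le> norm (prox g y - prox g x) * norm w" by (rule real_inner_class.Cauchy_Schwarz_ineq2[THEN abs_le_D1])
  also have "\<dots> \<le> norm (y - x) * norm w" by (intro mult_right_mono nonexp[OF g]) simp
  also have "norm (y - x) = (1/2) * norm w" unfolding y_def by simp
  finally have "(norm w)^2 \<le> (1/2) * (norm w)^2" by (simp add: power2_eq_square)
  hence "w = 0" by simp
  thus ?thesis unfolding w_def by simp
qed

lemma dens:
  fixes f :: "'a::{real_inner,complete_space} \<Rightarrow> ereal"
  assumes f: "f \<in> Gamma0" and y: "f y \<noteq> \<infinity>" and eps: "0 < \<epsilon>"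
  shows "\<exists>x. norm (prox f x - y) < \<epsilon> \<and> fr f (prox f x) \<le> fr f y"
proof -
  obtain A B where B: "0 \<le> B" and AB: "\<And>z. ereal (- A - B * norm (z - y)) \<le> f z"
    using lin_lower[OF f y] by blast
  define \<epsilon>' where "\<epsilon>' = min \<epsilon> 1"
  have e': "0 < \<epsilon>'" "\<epsilon>' \<le> 1" "\<epsilon>' \<le> \<epsilon>" unfolding \<epsilon>'_def using eps by auto
  define K where "K = \<bar>A + fr f y\<bar>"
  define c where "c = (K + B) / \<epsilon>'^2 + 1"
  have cpos: "0 < c" unfolding c_def K_def using B e' by (simp add: add_nonneg_pos)
  obtain p where pfin: "f p \<noteq> \<infinity>" and pm: "\<forall>z. f p + ereal (c * (norm (y - p))^2) \<le> f z + ereal (c * (norm (y - z))^2)"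
    using prox_exists[OF f cpos, of y] by blast
  have fpE: "f p = ereal (fr f p)" by (rule frE[OF f pfin])
  have fyE: "f y = ereal (fr f y)" by (rule frE[OF f y])
  have 1: "fr f p + c * (norm (y - p))^2 \<le> fr f y" using pm[rule_format, of y] fpE fyE by simp
  have 2: "- A - B * norm (p - y) \<le> fr f p" using AB[of p] fpE by simp
  define s where "s = norm (y - p)"
  have 3: "c * s^2 \<le> K + B * s" using 1 2 unfolding s_def K_def by (simp add: norm_minus_commute)
  have slt: "s < \<epsilon>'"
  proof (rule ccontr)
    assume "\<not> s < \<epsilon>'" hence se: "\<epsilon>' \<le> s" by simp
    hence spos: "0 < s" using e' by simp
    have "c * \<epsilon>' * s \<le> c * s^2" using se cpos spos by (simp add: power2_eq_square mult_right_mono)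
    also have "\<dots> \<le> K + B * s" by (rule 3)
    also have "\<dots> \<le> (K + B) * (s / \<epsilon>')"
    proof -
      have "1 \<le> s / \<epsilon>'" using se e' by simp
      hence "K * 1 \<le> K * (s / \<epsilon>')" unfolding K_def by (intro mult_left_mono) auto
      hence "K \<le> K * (s / \<epsilon>')" by simp
      moreover have "B * s \<le> B * (s / \<epsilon>')" using B e' spos by (simp add: field_simps mult_left_mono)
      moreover have "(K + B) * (s / \<epsilon>') = K * (s / \<epsilon>') + B * (s / \<epsilon>')" by (rule distrib_right)
      ultimately show ?thesis by linarith
    qed
    finally have h0: "c * \<epsilon>' * s \<le> (K + B) * (s / \<epsilon>')" .
    have "(c * \<epsilon>'^2) * s = (c * \<epsilon>' * s) * \<epsilon>'" by (simp add: power2_eq_square algebra_simps)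
    also have "\<dots> \<le> ((K + B) * (s / \<epsilon>')) * \<epsilon>'" using h0 e' by (intro mult_right_mono) auto
    also have "\<dots> = (K + B) * s" using e' by simp
    finally have "c * \<epsilon>'^2 \<le> K + B" using spos by (rule mult_right_le_imp_le)
    moreover have "c * \<epsilon>'^2 = K + B + \<epsilon>'^2" unfolding c_def using e' by (simp add: field_simps)
    ultimately show False using e' by simp
  qed
  define x where "x = p + (2 * c) *\<^sub>R (y - p)"
  have "prox f x = p"
  proof (rule prox_eq[OF f], rule allI)
    fix z
    show "f p + ereal ((norm (x - p))^2 / 2) \<le> f z + ereal ((norm (x - z))^2 / 2)"
    proof (cases "f z = \<infinity>")
      case True then show ?thesis by simp
    next
      case False
      have fzE: "f z = ereal (fr f z)" by (rule frE[OF f False])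
      have v: "fr f p + 2 * c * ((y - p) \<bullet> (z - p)) \<le> fr f z" by (rule var_ineq[OF f cpos fpE pm fzE])
      define J where "J = 2 * c * ((y - p) \<bullet> (z - p))"
      have v': "fr f p + J \<le> fr f z" using v unfolding J_def .
      have "x - z = (x - p) - (z - p)" by simp
      hence "(norm (x - z))^2 = (norm (x - p))^2 - 2 * ((x - p) \<bullet> (z - p)) + (norm (z - p))^2"
        by (simp only: nsq_diff)
      moreover have "(x - p) \<bullet> (z - p) = J" unfolding x_def J_def by simp
      ultimately have nx: "(norm (x - z))^2 = (norm (x - p))^2 - 2 * J + (norm (z - p))^2" by simp
      have "0 \<le> (norm (z - p))^2" by simp
      hence "fr f p + (norm (x - p))^2 / 2 \<le> fr f z + (norm (x - z))^2 / 2"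
        using v' nx by (simp add: add_divide_distrib diff_divide_distrib, insert zero_le_power2[of "norm (z - p)"], linarith)
      thus ?thesis using fpE fzE by simp
    qed
  qed
  moreover have "0 \<le> c * (norm (y - p))^2" using cpos by simp
  hence fpy: "fr f p \<le> fr f y" using 1 by linarith
  moreover have "norm (p - y) < \<epsilon>" using slt e' unfolding s_def by (simp add: norm_minus_commute)
  ultimately show ?thesis by blast
qed
lemma half:
  fixes f g :: "'a::{real_inner,complete_space} \<Rightarrow> ereal"
  assumes f: "f \<in> Gamma0" and g: "g \<in> Gamma0"
    and PQ: "\<And>x. prox f x = prox g x"
    and R: "\<And>x. fr f (prox f x) - fr f x0 = fr g (prox f x) - fr g x0"
    and y: "f y \<noteq> \<infinity>"
  shows "g y \<le> ereal (fr f y - fr f x0 + fr g x0)"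
proof (rule ccontr)
  define T where "T = fr f y - fr f x0 + fr g x0"
  assume "\<not> g y \<le> ereal (fr f y - fr f x0 + fr g x0)"
  hence "ereal T < g y" unfolding T_def by simp
  then obtain d where d: "d > 0" and dq: "\<And>q. dist q y < d \<Longrightarrow> ereal T < g q"
    using lsc_nbhd[OF g] by blast
  obtain x where x1: "norm (prox f x - y) < d" and x2: "fr f (prox f x) \<le> fr f y"
    using dens[OF f y d] by blast
  have "ereal T < g (prox f x)" using dq x1 by (simp add: dist_norm)
  moreover have "g (prox f x) = ereal (fr g (prox f x))" using frE[OF g prox_fin[OF g, of x]] PQ[of x] by simp
  moreover have "fr g (prox f x) \<le> T" using R[of x] x2 unfolding T_def by simp
  ultimately show False by simp
qed

theorem proposition5:
  fixes f g :: "'a::{real_inner, complete_space} \<Rightarrow> ereal" and x0 :: 'a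
  assumes "f \<in> Gamma0" and "g \<in> Gamma0"
    and "x0 \<in> edom f \<inter> edom g"
    and "\<And>x. norm (prox f x - x0) = norm (prox g x - x0)"
  shows "\<forall>x. f x - f x0 = g x - g x0"
proof
  fix y
  have f: "f \<in> Gamma0" and g: "g \<in> Gamma0" by fact+
  have x0f: "f x0 \<noteq> \<infinity>" and x0g: "g x0 \<noteq> \<infinity>" using assms(3) unfolding edom_def by auto
  have eq: "\<And>x. norm (prox f x - x0) = norm (prox g x - x0)" by fact
  have eq': "\<And>x. norm (prox g x - x0) = norm (prox f x - x0)" using eq by simp
  have D: "Fm f x0 x - Fm g x0 x = fr g x0 - fr f x0" for x
    using main_dir[OF f g x0f x0g eq, of x] main_dir[OF g f x0g x0f eq', of x] by simp
  have PQ: "prox f x = prox g x" for x by (rule PQ_eq[OF f g D])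
  have R: "fr f (prox f x) - fr f x0 = fr g (prox f x) - fr g x0" for x
    using D[of x] PQ[of x] unfolding Fm_def by simp
  have R': "fr g (prox g x) - fr g x0 = fr f (prox g x) - fr f x0" for x
    using R[of x] PQ[of x] by simp
  have PQ': "prox g x = prox f x" for x using PQ[of x] by simp
  have ef: "f x0 = ereal (fr f x0)" by (rule frE[OF f x0f])
  have eg: "g x0 = ereal (fr g x0)" by (rule frE[OF g x0g])
  show "f y - f x0 = g y - g x0"
  proof (cases "f y = \<infinity>")
    case False
    have g1: "g y \<le> ereal (fr f y - fr f x0 + fr g x0)" by (rule half[OF f g PQ R False])
    hence gy: "g y \<noteq> \<infinity>" by auto
    have f1: "f y \<le> ereal (fr g y - fr g x0 + fr f x0)" by (rule half[OF g f PQ' R' gy])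
    have "fr f y - fr f x0 = fr g y - fr g x0"
      using g1 f1 frE[OF f False] frE[OF g gy] by simp
    thus ?thesis using frE[OF f False] frE[OF g gy] ef eg by simp
  next
    case True
    have "g y = \<infinity>"
    proof (rule ccontr)
      assume gy: "g y \<noteq> \<infinity>"
      have "f y \<le> ereal (fr g y - fr g x0 + fr f x0)" by (rule half[OF g f PQ' R' gy])
      thus False using True by simp
    qed
    thus ?thesis using True ef eg by simp
  qed
qed

end
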